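(* For $v>0$ and $\tau\in\mathbb R$, \[ |\lambda(\tfrac12+i\tau,v)|\le\min\big(4,\,2\sqrt v/(|\tau|-v)\big)\quad\text{if }|\tau|>v, \] \[ |\Lambda(\tfrac12+i\tau,v)|\le\min\big(4,\,2\sqrt v/(v-|\tau|)\big)\quad\text{if }|\tau|<v. \]
   Context: For $v>0$ and $0<\Re s<1$: $\lambda(s,v)=\int_0^v e^{it}t^{s-1}\,dt$ and $\Lambda(s,v)=\int_v^\infty e^{it}t^{s-1}\,dt$ (improper integral). *)

theory Defs
  imports "HOL-Analysis.Analysis"
begin

definition inc_integrand :: "complex \<Rightarrow> real \<Rightarrow> complex" where
  "inc_integrand s t = exp (\<i> * of_real t) * (of_real t powr (s - 1))"

definition lower_inc :: "complex \<Rightarrow> real \<Rightarrow> complex" where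
  "lower_inc s v = integral {0..v} (inc_integrand s)"

definition upper_inc :: "complex \<Rightarrow> real \<Rightarrow> complex" where
  "upper_inc s v = Lim at_top (\<lambda>T::real. integral {v..T} (inc_integrand s))"

end

theory Submission
  imports Defs
begin


lemma f_eq:
  assumes "t > 0"
  shows "inc_integrand (1/2 + \<i> * of_real \<tau>) t = of_real (1 / sqrt t) * exp (\<i> * of_real (t + \<tau> * ln t))"
proof -
  have e: "exp (of_real (-(ln t / 2))) = (of_real (1/sqrt t) :: complex)"
    using assms by (simp add: exp_minus powr_half_sqrt[symmetric] powr_def field_simps flip: exp_of_real)
  have "inc_integrand (1/2 + \<i> * of_real \<tau>) t = exp (\<i> * of_real t + (-1/2 + \<i> * of_real \<tau>) * of_real (ln t))"
    using assms by (simp add: inc_integrand_def powr_def Ln_of_real exp_add)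
  also have "\<i> * of_real t + (-1/2 + \<i> * of_real \<tau>) * of_real (ln t) = of_real (-(ln t / 2)) + \<i> * of_real (t + \<tau> * ln t)"
    by (simp add: algebra_simps)
  also have "exp \<dots> = of_real (1 / sqrt t) * exp (\<i> * of_real (t + \<tau> * ln t))"
    by (simp only: exp_add e)
  finally show ?thesis .
qed

definition "ph \<tau> t = t + \<tau> * ln t"
definition "gg \<tau> t = sqrt t / (t + \<tau>)"
definition "gd \<tau> t = (\<tau> - t) / (2 * sqrt t * (t + \<tau>)^2)"
definition "EE \<tau> t = exp (\<i> * of_real (ph \<tau> t))"
definition "GG \<tau> t = - \<i> * of_real (gg \<tau> t) * EE \<tau> t"

lemma gg_deriv:
  assumes "t > 0" "t + \<tau> \<noteq> 0"
  shows "(gg \<tau> has_real_derivative gd \<tau> t) (at t)"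
proof -
  have d: "((\<lambda>t. sqrt t / (t + \<tau>)) has_real_derivative
     ((inverse (sqrt t) / 2) * (t + \<tau>) - sqrt t * (1 + 0)) / ((t + \<tau>) * (t + \<tau>))) (at t)"
    by (rule DERIV_divide[OF DERIV_real_sqrt[OF assms(1)] DERIV_add[OF DERIV_ident DERIV_const]]) (use assms in simp)
  have st: "sqrt t * sqrt t = t" "sqrt t > 0" using assms by auto
  have ne: "t + \<tau> \<noteq> 0" by fact
  have "((inverse (sqrt t) / 2) * (t + \<tau>) - sqrt t * (1 + 0)) / ((t + \<tau>) * (t + \<tau>)) = gd \<tau> t"
    unfolding gd_def using st ne
    by (simp add: field_simps power2_eq_square)
  with d show ?thesis unfolding gg_def[abs_def] by simp
qed

lemma EE_deriv:
  assumes "t > 0"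
  shows "(EE \<tau> has_vector_derivative (\<i> * of_real (1 + \<tau> / t) * EE \<tau> t)) (at t)"
proof -
  have d1: "((\<lambda>t. \<i> * of_real (ph \<tau> t)) has_vector_derivative (\<i> * of_real (1 + \<tau> / t))) (at t)"
  proof -
    have "(ph \<tau> has_real_derivative (1 + \<tau> * (1/t))) (at t)"
      unfolding ph_def[abs_def] using assms by (intro derivative_eq_intros) auto
    then have "((\<lambda>t. of_real (ph \<tau> t) :: complex) has_vector_derivative of_real (1 + \<tau> / t)) (at t)"
      by (intro has_vector_derivative_of_real) simp
    then show ?thesis
      using has_vector_derivative_mult[OF has_vector_derivative_const[of "\<i>"]] by fastforce
  qed
  have "((exp \<circ> (\<lambda>t. \<i> * of_real (ph \<tau> t))) has_vector_derivative
          (\<i> * of_real (1 + \<tau> / t)) * exp (\<i> * of_real (ph \<tau> t))) (at t)"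
    by (rule field_vector_diff_chain_at[OF d1]) (rule DERIV_exp)
  then show ?thesis unfolding EE_def[abs_def] o_def .
qed

lemma GG_deriv:
  assumes "t > 0" "t + \<tau> \<noteq> 0"
  shows "(GG \<tau> has_vector_derivative
     (inc_integrand (1/2 + \<i> * of_real \<tau>) t - \<i> * of_real (gd \<tau> t) * EE \<tau> t)) (at t)"
proof -
  have a: "((\<lambda>t. - \<i> * of_real (gg \<tau> t)) has_vector_derivative (- \<i> * of_real (gd \<tau> t))) (at t)"
    using has_vector_derivative_mult[OF has_vector_derivative_const[of "-\<i>"]
        has_vector_derivative_of_real[OF gg_deriv[OF assms]]] by simp
  have "(GG \<tau> has_vector_derivative
     (- \<i> * of_real (gg \<tau> t) * (\<i> * of_real (1 + \<tau> / t) * EE \<tau> t) + (- \<i> * of_real (gd \<tau> t)) * EE \<tau> t)) (at t)"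
    unfolding GG_def[abs_def] by (rule has_vector_derivative_mult[OF a EE_deriv[OF assms(1)]])
  also have "- \<i> * of_real (gg \<tau> t) * (\<i> * of_real (1 + \<tau> / t) * EE \<tau> t) + (- \<i> * of_real (gd \<tau> t)) * EE \<tau> t
      = of_real (gg \<tau> t * (1 + \<tau> / t)) * EE \<tau> t - \<i> * of_real (gd \<tau> t) * EE \<tau> t"
    by (simp add: algebra_simps)
  also have "gg \<tau> t * (1 + \<tau> / t) = 1 / sqrt t"
  proof -
    have st: "sqrt t * sqrt t = t" "sqrt t > 0" using assms by auto
    have "1 + \<tau>/t = (t+\<tau>)/t" using assms by (simp add: field_simps)
    then have "gg \<tau> t * (1 + \<tau> / t) = sqrt t / t" using assms by (simp add: gg_def)
    also have "\<dots> = 1 / sqrt t" using st by (metis divide_divide_eq_right div_by_1 divide_self_if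
      nonzero_mult_div_cancel_left less_irrefl)
    finally show ?thesis .
  qed
  finally show ?thesis
    using f_eq[OF assms(1)] unfolding EE_def ph_def by simp
qed
abbreviation "ff \<tau> \<equiv> inc_integrand (1/2 + \<i> * of_real \<tau>)"

lemma ibp:
  fixes a b \<tau> :: real
  assumes a: "0 < a" "a \<le> b" and ne: "\<And>t. t \<in> {a..b} \<Longrightarrow> t + \<tau> \<noteq> 0"
    and sgn: "(\<forall>t\<in>{a..b}. gd \<tau> t \<ge> 0) \<or> (\<forall>t\<in>{a..b}. gd \<tau> t \<le> 0)"
  shows "ff \<tau> integrable_on {a..b}"
   "norm (integral {a..b} (ff \<tau>)) \<le> \<bar>gg \<tau> a\<bar> + \<bar>gg \<tau> b\<bar> + \<bar>gg \<tau> b - gg \<tau> a\<bar>"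
proof -
  define R where "R t = \<i> * of_real (gd \<tau> t) * EE \<tau> t" for t
  have h1: "((\<lambda>t. ff \<tau> t - R t) has_integral GG \<tau> b - GG \<tau> a) {a..b}"
  proof (rule fundamental_theorem_of_calculus[OF a(2)])
    fix t assume t: "t \<in> {a..b}"
    then have "t > 0" "t + \<tau> \<noteq> 0" using a ne by auto
    from has_vector_derivative_at_within[OF GG_deriv[OF this]]
    show "(GG \<tau> has_vector_derivative ff \<tau> t - R t) (at t within {a..b})" unfolding R_def .
  qed
  have cR: "continuous_on {a..b} R"
    unfolding R_def EE_def ph_def gd_def
    apply (intro continuous_intros)
    subgoal using a ne by (metis atLeastAtMost_iff less_le_trans mult_eq_0_iff power_eq_0_iff real_sqrt_eq_zero_cancel_iff zero_neq_numeral less_irrefl)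
    subgoal using a by auto
    done
  then have iR: "R integrable_on {a..b}" by (rule integrable_continuous_interval)
  have eq: "ff \<tau> = (\<lambda>t. (ff \<tau> t - R t) + R t)" by simp
  show iff: "ff \<tau> integrable_on {a..b}"
    by (subst eq, rule integrable_add[OF has_integral_integrable[OF h1] iR])
  have int_eq: "integral {a..b} (ff \<tau>) = (GG \<tau> b - GG \<tau> a) + integral {a..b} R"
    by (subst eq, subst integral_add[OF has_integral_integrable[OF h1] iR]) (simp add: integral_unique[OF h1])
  have nG: "norm (GG \<tau> t) = \<bar>gg \<tau> t\<bar>" for t
    unfolding GG_def EE_def norm_mult by simp
  have nR: "norm (R t) = \<bar>gd \<tau> t\<bar>" for t
    unfolding R_def EE_def norm_mult by simp
  have hgd: "(gd \<tau> has_integral gg \<tau> b - gg \<tau> a) {a..b}"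
  proof (rule fundamental_theorem_of_calculus[OF a(2)])
    fix t assume t: "t \<in> {a..b}"
    then have "t > 0" "t + \<tau> \<noteq> 0" using a ne by auto
    from has_vector_derivative_at_within[OF gg_deriv[OF this, unfolded has_real_derivative_iff_has_vector_derivative]]
    show "(gg \<tau> has_vector_derivative gd \<tau> t) (at t within {a..b})" .
  qed
  have cgd: "continuous_on {a..b} (\<lambda>t. \<bar>gd \<tau> t\<bar>)"
    unfolding gd_def
    apply (intro continuous_intros)
    subgoal using a ne by (metis atLeastAtMost_iff less_le_trans mult_eq_0_iff power_eq_0_iff real_sqrt_eq_zero_cancel_iff zero_neq_numeral less_irrefl)
    done
  have "norm (integral {a..b} R) \<le> integral {a..b} (\<lambda>t. \<bar>gd \<tau> t\<bar>)"
    by (rule integral_norm_bound_integral[OF iR integrable_continuous_interval[OF cgd]]) (simp add: nR)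
  also have "integral {a..b} (\<lambda>t. \<bar>gd \<tau> t\<bar>) = \<bar>gg \<tau> b - gg \<tau> a\<bar>"
    using sgn
  proof
    assume p: "\<forall>t\<in>{a..b}. gd \<tau> t \<ge> 0"
    have "integral {a..b} (\<lambda>t. \<bar>gd \<tau> t\<bar>) = integral {a..b} (gd \<tau>)"
      using p by (intro integral_cong) auto
    also have "\<dots> = gg \<tau> b - gg \<tau> a" using hgd by blast
    moreover have "gg \<tau> b - gg \<tau> a \<ge> 0" using has_integral_nonneg[OF hgd] p by auto
    ultimately show ?thesis by simp
  next
    assume p: "\<forall>t\<in>{a..b}. gd \<tau> t \<le> 0"
    have "integral {a..b} (\<lambda>t. \<bar>gd \<tau> t\<bar>) = integral {a..b} (\<lambda>t. - gd \<tau> t)"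
      using p by (intro integral_cong) auto
    also have "\<dots> = - (gg \<tau> b - gg \<tau> a)" using has_integral_neg[OF hgd] by blast
    moreover have "- (gg \<tau> b - gg \<tau> a) \<ge> 0" using has_integral_nonneg[OF has_integral_neg[OF hgd]] p by auto
    ultimately show ?thesis by simp
  qed
  finally have nI: "norm (integral {a..b} R) \<le> \<bar>gg \<tau> b - gg \<tau> a\<bar>" .
  have "norm (integral {a..b} (ff \<tau>)) \<le> norm (GG \<tau> b) + norm (GG \<tau> a) + norm (integral {a..b} R)"
    unfolding int_eq by (rule order_trans[OF norm_triangle_ineq add_right_mono[OF norm_triangle_ineq4]])
  then show "norm (integral {a..b} (ff \<tau>)) \<le> \<bar>gg \<tau> a\<bar> + \<bar>gg \<tau> b\<bar> + \<bar>gg \<tau> b - gg \<tau> a\<bar>"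
    using nI by (simp add: nG)
qed

lemma ff_zero: "ff \<tau> 0 = 0"
  by (simp add: inc_integrand_def)

lemma norm_ff: "t \<ge> 0 \<Longrightarrow> norm (ff \<tau> t) \<le> 1 / sqrt t"
proof (cases "t = 0")
  case True then show ?thesis by (simp add: ff_zero)
next
  case False
  assume "t \<ge> 0" with False have t: "t > 0" by auto
  show ?thesis unfolding f_eq[OF t] norm_mult using t by (simp add: norm_divide)
qed

lemma triv:
  fixes a b \<tau> :: real
  assumes a: "0 \<le> a" "a \<le> b"
  shows "ff \<tau> integrable_on {a..b}" "norm (integral {a..b} (ff \<tau>)) \<le> 2 * sqrt b - 2 * sqrt a"
proof -
  have hs: "((\<lambda>t. 1 / sqrt t) has_integral 2 * sqrt b - 2 * sqrt a) {a..b}"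
  proof (rule fundamental_theorem_of_calculus_interior[OF a(2)])
    show "continuous_on {a..b} (\<lambda>t. 2 * sqrt t)" by (intro continuous_intros)
    fix x assume x: "x \<in> {a<..<b}"
    then have "x > 0" using a by auto
    have d: "((\<lambda>t. 2 * sqrt t) has_real_derivative 2 * (inverse (sqrt x) / 2)) (at x)"
      by (rule DERIV_cmult[OF DERIV_real_sqrt[OF \<open>x > 0\<close>]])
    have eq: "2 * (inverse (sqrt x) / 2) = 1 / sqrt x" by (simp add: inverse_eq_divide)
    from d[unfolded eq] show "((\<lambda>t. 2 * sqrt t) has_vector_derivative 1 / sqrt x) (at x)"
      by (simp only: has_real_derivative_iff_has_vector_derivative)
  qed
  have neg: "negligible ({a..b} - {a<..b})" "negligible ({a<..b} - {a..b})"
  proof -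
    have "{a..b} - {a<..b} \<subseteq> {a}" "{a<..b} - {a..b} = {}" by auto
    then show "negligible ({a..b} - {a<..b})" "negligible ({a<..b} - {a..b})"
      using negligible_subset[OF negligible_sing] by auto
  qed
  have is1: "(\<lambda>t. 1 / sqrt t) integrable_on {a<..b}"
    by (rule integrable_spike_set[OF has_integral_integrable[OF hs]])
       (auto intro: negligible_subset[OF neg(1)] negligible_subset[OF neg(2)])
  have cont: "continuous_on {a<..b} (ff \<tau>)"
  proof -
    have "continuous_on {a<..b} (\<lambda>t. of_real (1 / sqrt t) * exp (\<i> * of_real (t + \<tau> * ln t)))"
      apply (intro continuous_intros)
      using a by auto
    then show ?thesis
      by (rule continuous_on_eq) (use a in \<open>simp add: f_eq\<close>)
  qed
  have if1: "ff \<tau> integrable_on {a<..b}"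
  proof (rule measurable_bounded_by_integrable_imp_integrable[OF _ is1])
    show "ff \<tau> \<in> borel_measurable (lebesgue_on {a<..b})"
      by (rule continuous_imp_measurable_on_sets_lebesgue[OF cont]) simp
    show "\<And>x. x \<in> {a<..b} \<Longrightarrow> norm (ff \<tau> x) \<le> 1 / sqrt x" using a by (intro norm_ff) auto
  qed simp
  show iff: "ff \<tau> integrable_on {a..b}"
    by (rule integrable_spike_set[OF if1])
       (auto intro: negligible_subset[OF neg(1)] negligible_subset[OF neg(2)])
  have "norm (integral {a..b} (ff \<tau>)) \<le> integral {a..b} (\<lambda>t. 1 / sqrt t)"
    by (rule integral_norm_bound_integral[OF iff has_integral_integrable[OF hs]]) (use a in \<open>auto intro: norm_ff\<close>)
  then show "norm (integral {a..b} (ff \<tau>)) \<le> 2 * sqrt b - 2 * sqrt a"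
    by (simp add: integral_unique[OF hs])
qed

lemma sum_bound_same_sign:
  fixes x y M :: real
  assumes "\<bar>x\<bar> \<le> M" "\<bar>y\<bar> \<le> M" "(x \<ge> 0 \<and> y \<ge> 0) \<or> (x \<le> 0 \<and> y \<le> 0)"
  shows "\<bar>x\<bar> + \<bar>y\<bar> + \<bar>y - x\<bar> \<le> 2 * M"
  using assms by linarith

lemma gg_bound_lower:
  assumes "0 < t" "t \<le> b" "b < \<bar>\<tau>\<bar>"
  shows "\<bar>gg \<tau> t\<bar> \<le> sqrt b / (\<bar>\<tau>\<bar> - b)"
proof -
  have "\<bar>gg \<tau> t\<bar> = sqrt t / \<bar>t + \<tau>\<bar>" using assms by (simp add: gg_def abs_divide)
  also have "\<dots> \<le> sqrt b / (\<bar>\<tau>\<bar> - b)"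
    using assms by (intro frac_le) auto
  finally show ?thesis .
qed

lemma lower_eps:
  assumes "0 < e" "e \<le> b" "b < \<bar>\<tau>\<bar>"
  shows "norm (integral {0..b} (ff \<tau>)) \<le> 2 * sqrt e + 2 * (sqrt b / (\<bar>\<tau>\<bar> - b))"
proof -
  have ne: "\<And>t. t \<in> {e..b} \<Longrightarrow> t + \<tau> \<noteq> 0" using assms by auto
  have sgn: "(\<forall>t\<in>{e..b}. gd \<tau> t \<ge> 0) \<or> (\<forall>t\<in>{e..b}. gd \<tau> t \<le> 0)"
  proof (cases "\<tau> \<ge> 0")
    case True
    then have "\<forall>t\<in>{e..b}. gd \<tau> t \<ge> 0" using assms unfolding gd_def
      by (auto intro!: divide_nonneg_pos)
    then show ?thesis ..
  next
    case False
    then have "\<forall>t\<in>{e..b}. gd \<tau> t \<le> 0" using assms unfolding gd_def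
      by (auto intro!: divide_nonpos_pos)
    then show ?thesis ..
  qed
  have I: "norm (integral {e..b} (ff \<tau>)) \<le> \<bar>gg \<tau> e\<bar> + \<bar>gg \<tau> b\<bar> + \<bar>gg \<tau> b - gg \<tau> e\<bar>"
    using ibp(2)[OF _ _ ne sgn] assms by auto
  have ss: "(gg \<tau> e \<ge> 0 \<and> gg \<tau> b \<ge> 0) \<or> (gg \<tau> e \<le> 0 \<and> gg \<tau> b \<le> 0)"
  proof (cases "\<tau> \<ge> 0")
    case True then show ?thesis using assms unfolding gg_def by auto
  next
    case False then show ?thesis using assms unfolding gg_def
      by (auto intro!: divide_nonneg_neg)
  qed
  have I2: "norm (integral {e..b} (ff \<tau>)) \<le> 2 * (sqrt b / (\<bar>\<tau>\<bar> - b))"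
  proof -
    have "\<bar>gg \<tau> e\<bar> \<le> sqrt b / (\<bar>\<tau>\<bar> - b)" by (rule gg_bound_lower) (use assms in auto)
    moreover have "\<bar>gg \<tau> b\<bar> \<le> sqrt b / (\<bar>\<tau>\<bar> - b)" by (rule gg_bound_lower) (use assms in auto)
    ultimately have "\<bar>gg \<tau> e\<bar> + \<bar>gg \<tau> b\<bar> + \<bar>gg \<tau> b - gg \<tau> e\<bar> \<le> 2 * (sqrt b / (\<bar>\<tau>\<bar> - b))"
      by (rule sum_bound_same_sign[OF _ _ ss])
    with I show ?thesis by linarith
  qed
  have T: "norm (integral {0..e} (ff \<tau>)) \<le> 2 * sqrt e - 2 * sqrt 0"
    using triv(2)[of 0 e] assms by auto
  have "integral {0..b} (ff \<tau>) = integral {0..e} (ff \<tau>) + integral {e..b} (ff \<tau>)"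
    using Henstock_Kurzweil_Integration.integral_combine[where a=0 and c=e and b=b and f="ff \<tau>", OF _ _ triv(1)] assms by auto
  then have "norm (integral {0..b} (ff \<tau>)) \<le> norm (integral {0..e} (ff \<tau>)) + norm (integral {e..b} (ff \<tau>))"
    by (simp add: norm_triangle_ineq)
  then show ?thesis using T I2 by simp
qed

lemma le_of_eps:
  fixes x B b :: real
  assumes "b > 0" "\<And>e. 0 < e \<Longrightarrow> e \<le> b \<Longrightarrow> x \<le> 2 * sqrt e + B"
  shows "x \<le> B"
proof (rule ccontr)
  assume "\<not> x \<le> B"
  then have d: "x - B > 0" by simp
  define e where "e = min b (((x - B) / 4)^2)"
  have e: "0 < e" "e \<le> b" using d assms(1) by (auto simp: e_def)
  have "sqrt e \<le> sqrt (((x - B) / 4)^2)" by (rule real_sqrt_le_mono) (simp add: e_def)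
  also have "\<dots> = (x - B) / 4" using d by simp
  finally have "sqrt e \<le> (x - B) / 4" .
  then have "2 * sqrt e < x - B" using d by (simp add: field_simps)
  with assms(2)[OF e] show False by linarith
qed

lemma lower_key:
  assumes "0 < b" "b < \<bar>\<tau>\<bar>"
  shows "norm (integral {0..b} (ff \<tau>)) \<le> 2 * sqrt b / (\<bar>\<tau>\<bar> - b)"
  using le_of_eps[OF assms(1), of "norm (integral {0..b} (ff \<tau>))" "2 * (sqrt b / (\<bar>\<tau>\<bar> - b))"]
    lower_eps[OF _ _ assms(2)] by auto

lemma gg_bound_upper:
  assumes "\<bar>\<tau>\<bar> < a" "a \<le> t"
  shows "\<bar>gg \<tau> t\<bar> \<le> sqrt a / (a - \<bar>\<tau>\<bar>)" "gg \<tau> t \<ge> 0"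
proof -
  define c where "c = \<bar>\<tau>\<bar>"
  have c: "c \<ge> 0" "c < a" "a \<le> t" using assms by (auto simp: c_def)
  have tp: "t + \<tau> > 0" "t + \<tau> \<ge> t - c" using assms by (auto simp: c_def)
  show "gg \<tau> t \<ge> 0" using tp c by (auto simp: gg_def intro!: divide_nonneg_pos)
  obtain x y where xy: "x = sqrt a" "y = sqrt t" by blast
  have x: "x > 0" "x \<le> y" "x * x = a" "y * y = t" using c xy by (auto simp: real_sqrt_le_mono)
  have key: "y * (a - c) \<le> x * (t - c)"
  proof -
    have "0 \<le> (y - x) * (x * y + c)" using x c by (intro mult_nonneg_nonneg) auto
    moreover have "x * (t - c) - y * (a - c) = (y - x) * (x * y + c)"
      unfolding x(3)[symmetric] x(4)[symmetric] by (simp add: algebra_simps)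
    ultimately show ?thesis by linarith
  qed
  have "\<bar>gg \<tau> t\<bar> = y / (t + \<tau>)" using tp xy c by (simp add: gg_def)
  also have "\<dots> \<le> y / (t - c)" using tp c x by (intro divide_left_mono) auto
  also have "\<dots> \<le> x / (a - c)" using key c x by (simp add: field_simps)
  finally show "\<bar>gg \<tau> t\<bar> \<le> sqrt a / (a - \<bar>\<tau>\<bar>)" using xy by (simp add: c_def)
qed

lemma upper_key:
  assumes "\<bar>\<tau>\<bar> < a" "a \<le> T"
  shows "norm (integral {a..T} (ff \<tau>)) \<le> 2 * (sqrt a / (a - \<bar>\<tau>\<bar>))"
proof -
  have a: "0 < a" using assms by linarith
  have ne: "\<And>t. t \<in> {a..T} \<Longrightarrow> t + \<tau> \<noteq> 0" using assms by auto
  have "\<forall>t\<in>{a..T}. gd \<tau> t \<le> 0" using assms unfolding gd_def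
    by (auto intro!: divide_nonpos_pos)
  then have sgn: "(\<forall>t\<in>{a..T}. gd \<tau> t \<ge> 0) \<or> (\<forall>t\<in>{a..T}. gd \<tau> t \<le> 0)" ..
  have I: "norm (integral {a..T} (ff \<tau>)) \<le> \<bar>gg \<tau> a\<bar> + \<bar>gg \<tau> T\<bar> + \<bar>gg \<tau> T - gg \<tau> a\<bar>"
    by (rule ibp(2)[OF a assms(2) ne sgn])
  have "\<bar>gg \<tau> a\<bar> + \<bar>gg \<tau> T\<bar> + \<bar>gg \<tau> T - gg \<tau> a\<bar> \<le> 2 * (sqrt a / (a - \<bar>\<tau>\<bar>))"
    using assms by (intro sum_bound_same_sign gg_bound_upper) (auto intro!: disjI1 gg_bound_upper)
  with I show ?thesis by linarith
qed

lemma upper_split: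
  assumes "0 \<le> v" "v \<le> M" "M \<le> x"
  shows "integral {v..x} (ff \<tau>) = integral {v..M} (ff \<tau>) + integral {M..x} (ff \<tau>)"
  using Henstock_Kurzweil_Integration.integral_combine[where a=v and c=M and b=x and f="ff \<tau>", OF _ _ triv(1)] assms
  by auto

lemma upper_conv:
  assumes "\<bar>\<tau>\<bar> < v"
  shows "\<exists>L. ((\<lambda>T. integral {v..T} (ff \<tau>)) \<longlongrightarrow> L) at_top"
proof -
  define F where "F T = integral {v..T} (ff \<tau>)" for T
  have v: "0 < v" using assms by linarith
  have "cauchy_filter (filtermap F at_top)"
    unfolding cauchy_filter_metric_filtermap
  proof (intro allI impI)
    fix e :: real assume e: "e > 0"
    define M where "M = max v (max (2 * \<bar>\<tau>\<bar> + 1) (64 / e^2 + 1))"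
    have M: "v \<le> M" "2 * \<bar>\<tau>\<bar> + 1 \<le> M" "64 / e^2 + 1 \<le> M" by (auto simp: M_def)
    have Mpos: "M > 0" using M v by linarith
    have small: "4 * (sqrt M / (M - \<bar>\<tau>\<bar>)) < e"
    proof -
      have h: "M - \<bar>\<tau>\<bar> \<ge> M / 2" using M by linarith
      have "sqrt M / (M - \<bar>\<tau>\<bar>) \<le> sqrt M / (M / 2)"
        using h Mpos by (intro divide_left_mono) auto
      also have "sqrt M / (M / 2) = 2 / sqrt M"
        using Mpos by (simp add: field_simps)
      finally have A: "sqrt M / (M - \<bar>\<tau>\<bar>) \<le> 2 / sqrt M" .
      have "sqrt (64 / e^2) < sqrt M" using M by (intro real_sqrt_less_mono) linarith
      moreover have "sqrt (64 / e^2) = 8 / e" using e by (simp add: real_sqrt_divide)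
      ultimately have "8 / e < sqrt M" by simp
      then have "8 < e * sqrt M" using e by (simp add: field_simps)
      then have "8 / sqrt M < e" using Mpos by (simp add: field_simps)
      moreover have "4 * (sqrt M / (M - \<bar>\<tau>\<bar>)) \<le> 4 * (2 / sqrt M)" using A by linarith
      moreover have "4 * (2 / sqrt M) = 8 / sqrt M" by simp
      ultimately show ?thesis by linarith
    qed
    show "\<exists>P. eventually P at_top \<and> (\<forall>x y. P x \<and> P y \<longrightarrow> dist (F x) (F y) < e)"
    proof (intro exI conjI allI impI)
      show "eventually (\<lambda>x. M \<le> x) at_top" by (rule eventually_ge_at_top)
      fix x y assume xy: "M \<le> x \<and> M \<le> y"
      have Fx: "F x = integral {v..M} (ff \<tau>) + integral {M..x} (ff \<tau>)"
        unfolding F_def using xy M v by (intro upper_split) auto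
      have Fy: "F y = integral {v..M} (ff \<tau>) + integral {M..y} (ff \<tau>)"
        unfolding F_def using xy M v by (intro upper_split) auto
      have bx: "norm (integral {M..x} (ff \<tau>)) \<le> 2 * (sqrt M / (M - \<bar>\<tau>\<bar>))"
        using xy M assms by (intro upper_key) auto
      have by': "norm (integral {M..y} (ff \<tau>)) \<le> 2 * (sqrt M / (M - \<bar>\<tau>\<bar>))"
        using xy M assms by (intro upper_key) auto
      have "dist (F x) (F y) = norm (integral {M..x} (ff \<tau>) - integral {M..y} (ff \<tau>))"
        by (simp add: Fx Fy dist_norm)
      also have "\<dots> \<le> norm (integral {M..x} (ff \<tau>)) + norm (integral {M..y} (ff \<tau>))"
        by (rule norm_triangle_ineq4)
      also have "\<dots> < e" using bx by' small by linarith
      finally show "dist (F x) (F y) < e" .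
    qed
  qed
  moreover have "filtermap F at_top \<le> principal UNIV" by simp
  moreover have "filtermap F at_top \<noteq> bot" by (simp add: filtermap_bot_iff)
  ultimately obtain c where "filtermap F at_top \<le> nhds c"
    using cauchy_filter_complete_converges[OF _ complete_UNIV] by blast
  then have "(F \<longlongrightarrow> c) at_top" by (simp add: filterlim_def)
  then show ?thesis unfolding F_def by blast
qed

lemma lower_four:
  assumes "0 < v" "v < \<bar>\<tau>\<bar>"
  shows "norm (integral {0..v} (ff \<tau>)) \<le> 4"
proof (cases "v \<le> 4")
  case True
  have "norm (integral {0..v} (ff \<tau>)) \<le> 2 * sqrt v - 2 * sqrt 0" using triv(2)[of 0 v] assms by auto
  moreover have "sqrt v \<le> sqrt 4" using True by (rule real_sqrt_le_mono)
  ultimately show ?thesis by simp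
next
  case False
  define x where "x = sqrt v"
  have x: "x > 2" "x * x = v" using False assms by (auto simp: x_def real_less_rsqrt)
  have xx: "2 * x < x * x" using x by (intro mult_strict_right_mono) auto
  define t0 where "t0 = (x - 1)^2"
  have st0: "sqrt t0 = x - 1" using x by (simp add: t0_def)
  have t0: "0 < t0" "t0 \<le> v" "t0 < \<bar>\<tau>\<bar>" "v - t0 = 2 * x - 1"
    using x xx assms by (auto simp: t0_def power2_eq_square algebra_simps)
  have split: "integral {0..v} (ff \<tau>) = integral {0..t0} (ff \<tau>) + integral {t0..v} (ff \<tau>)"
    using Henstock_Kurzweil_Integration.integral_combine[where a=0 and c=t0 and b=v and f="ff \<tau>", OF _ _ triv(1)] t0
    by auto
  have A: "norm (integral {0..t0} (ff \<tau>)) \<le> 2 * sqrt t0 / (\<bar>\<tau>\<bar> - t0)"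
    using lower_key[OF t0(1) t0(3)] .
  have A1: "2 * sqrt t0 / (\<bar>\<tau>\<bar> - t0) \<le> 1"
    using t0 assms x xx by (simp add: st0 pos_divide_le_eq)
  have B: "norm (integral {t0..v} (ff \<tau>)) \<le> 2 * sqrt v - 2 * sqrt t0"
    using triv(2)[of t0 v] t0 by auto
  have B1: "2 * sqrt v - 2 * sqrt t0 = 2" using st0 by (simp add: x_def)
  have "norm (integral {0..v} (ff \<tau>)) \<le> norm (integral {0..t0} (ff \<tau>)) + norm (integral {t0..v} (ff \<tau>))"
    unfolding split by (rule norm_triangle_ineq)
  then show ?thesis using A A1 B B1 by linarith
qed

lemma upper_four:
  assumes "\<bar>\<tau>\<bar> < v" "v + 2 * sqrt v + 1 \<le> T"
  shows "norm (integral {v..T} (ff \<tau>)) \<le> 4"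
proof -
  define x where "x = sqrt v"
  have v: "v > 0" using assms by linarith
  have x: "x > 0" "x * x = v" using v by (auto simp: x_def)
  define t1 where "t1 = (x + 1)^2"
  have st1: "sqrt t1 = x + 1" using x by (simp add: t1_def)
  have t1: "v \<le> t1" "t1 \<le> T" "\<bar>\<tau>\<bar> < t1" "t1 - v = 2 * x + 1"
    using x assms by (auto simp: t1_def x_def[symmetric] power2_eq_square algebra_simps)
  have split: "integral {v..T} (ff \<tau>) = integral {v..t1} (ff \<tau>) + integral {t1..T} (ff \<tau>)"
    using upper_split[OF _ t1(1) t1(2)] v by auto
  have A: "norm (integral {t1..T} (ff \<tau>)) \<le> 2 * (sqrt t1 / (t1 - \<bar>\<tau>\<bar>))"
    using upper_key[OF t1(3) t1(2)] .
  have A1: "2 * (sqrt t1 / (t1 - \<bar>\<tau>\<bar>)) \<le> 2"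
    using t1 assms x by (simp add: st1 pos_divide_le_eq)
  have B: "norm (integral {v..t1} (ff \<tau>)) \<le> 2 * sqrt t1 - 2 * sqrt v"
    using triv(2)[of v t1] t1 v by auto
  have B1: "2 * sqrt t1 - 2 * sqrt v = 2" using st1 by (simp add: x_def)
  have "norm (integral {v..T} (ff \<tau>)) \<le> norm (integral {v..t1} (ff \<tau>)) + norm (integral {t1..T} (ff \<tau>))"
    unfolding split by (rule norm_triangle_ineq)
  then show ?thesis using A A1 B B1 by linarith
qed

theorem proposition8:
  fixes v \<tau> :: real
  assumes "v > 0"
  shows "(\<bar>\<tau>\<bar> > v \<longrightarrow>
            norm (lower_inc (1/2 + \<i> * of_real \<tau>) v) \<le> min 4 (2 * sqrt v / (\<bar>\<tau>\<bar> - v)))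
       \<and> (\<bar>\<tau>\<bar> < v \<longrightarrow>
            norm (upper_inc (1/2 + \<i> * of_real \<tau>) v) \<le> min 4 (2 * sqrt v / (v - \<bar>\<tau>\<bar>)))"
proof (intro conjI impI)
  assume tv: "\<bar>\<tau>\<bar> > v"
  show "norm (lower_inc (1/2 + \<i> * of_real \<tau>) v) \<le> min 4 (2 * sqrt v / (\<bar>\<tau>\<bar> - v))"
    unfolding lower_inc_def using lower_four[OF assms tv] lower_key[OF assms tv] by simp
next
  assume tv: "\<bar>\<tau>\<bar> < v"
  obtain L where L: "((\<lambda>T. integral {v..T} (ff \<tau>)) \<longlongrightarrow> L) at_top"
    using upper_conv[OF tv] by blast
  have U: "upper_inc (1/2 + \<i> * of_real \<tau>) v = L"
    unfolding upper_inc_def by (rule tendsto_Lim[OF trivial_limit_at_top_linorder L])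
  have b1: "norm L \<le> 4"
  proof (rule Lim_norm_ubound[OF trivial_limit_at_top_linorder L])
    show "eventually (\<lambda>T. norm (integral {v..T} (ff \<tau>)) \<le> 4) at_top"
      using eventually_ge_at_top[of "v + 2 * sqrt v + 1"] by eventually_elim (rule upper_four[OF tv])
  qed
  have b2: "norm L \<le> 2 * sqrt v / (v - \<bar>\<tau>\<bar>)"
  proof (rule Lim_norm_ubound[OF trivial_limit_at_top_linorder L])
    show "eventually (\<lambda>T. norm (integral {v..T} (ff \<tau>)) \<le> 2 * sqrt v / (v - \<bar>\<tau>\<bar>)) at_top"
      using eventually_ge_at_top[of v] by eventually_elim (use upper_key[OF tv] in simp)
  qed
  show "norm (upper_inc (1/2 + \<i> * of_real \<tau>) v) \<le> min 4 (2 * sqrt v / (v - \<bar>\<tau>\<bar>))"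
    unfolding U using b1 b2 by simp
qed

end
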